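(* Let $n_p,n,N$ be positive integers and consider images with $n$ pixels from which $N$ square patches of $n_p$ pixels are extracted with unit stride and periodic boundary conditions (so every pixel belongs to exactly $n_p$ patches and $\sum_{i=1}^N\mathbf{P}_i^T\mathbf{P}_i=n_p\mathbf{I}$), where $\mathbf{P}_i\in\{0,1\}^{n_p\times n}$ is the binary matrix extracting the $i$-th patch. Let $\mathbf{C}_1,\dots,\mathbf{C}_K\in\mathbb{R}^{n_p\times n_p}$ be symmetric positive semi-definite matrices, let $\sigma^2>0$, and for each patch $i$ let $\beta_1^i,\dots,\beta_K^i\ge 0$ with $\sum_{j=1}^K\beta_j^i=1$. Define $$\mathbf{F}_i=\sum_{j=1}^K\beta_j^i\,\mathbf{C}_j(\mathbf{C}_j+\sigma^2\mathbf{I})^{-1},\qquad \mathbf{W}=\frac1{n_p}\sum_{i=1}^N\mathbf{P}_i^T\mathbf{F}_i\mathbf{P}_i.$$ Then $\mathbf{W}$ is symmetric, positive semi-definite, and its maximum eigenvalue is no larger than $1$.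
   Context: $\mathbf{W}$ is the linear map implemented by a patch-based Gaussian-mixture MMSE denoiser with fixed (pre-computed) posterior weights $\beta_j^i$: each noisy patch $\mathbf{P}_i\mathbf{y}$ is estimated as $\mathbf{F}_i\mathbf{P}_i\mathbf{y}$, and the patch estimates are put back in place and averaged. *)

theory Defs
  imports "HOL-Analysis.Analysis"
begin

definition psd_matrix :: "real^'n^'n \<Rightarrow> bool" where
  "psd_matrix A \<longleftrightarrow> transpose A = A \<and> (\<forall>x. 0 \<le> x \<bullet> (A *v x))"

definition is_eigenvalue :: "real^'n^'n \<Rightarrow> real \<Rightarrow> bool" where
  "is_eigenvalue A l \<longleftrightarrow> (\<exists>v. v \<noteq> 0 \<and> A *v v = l *\<^sub>R v)"

definition extraction_matrix :: "real^'n^'p \<Rightarrow> bool" where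
  "extraction_matrix P \<longleftrightarrow>
     (\<forall>u j. P $ u $ j = 0 \<or> P $ u $ j = 1) \<and>
     (\<forall>u. \<exists>!j. P $ u $ j = 1) \<and>
     (\<forall>j. \<forall>u u'. P $ u $ j = 1 \<and> P $ u' $ j = 1 \<longrightarrow> u = u')"

definition gmm_filter :: "('k \<Rightarrow> real) \<Rightarrow> ('k \<Rightarrow> real^'p^'p) \<Rightarrow> real \<Rightarrow> real^'p^'p" where
  "gmm_filter b C s2 = (\<Sum>j\<in>UNIV. b j *\<^sub>R (C j ** matrix_inv (C j + s2 *\<^sub>R mat 1)))"

definition gmm_W :: "('i \<Rightarrow> real^'n^'p) \<Rightarrow> ('i \<Rightarrow> 'k \<Rightarrow> real) \<Rightarrow> ('k \<Rightarrow> real^'p^'p) \<Rightarrow> real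
                     \<Rightarrow> real^'n^'n" where
  "gmm_W P beta C s2 = (1 / real CARD('p)) *\<^sub>R
     (\<Sum>i\<in>UNIV. transpose (P i) ** gmm_filter (beta i) C s2 ** P i)"

end

theory Submission
  imports Defs
begin

lemma transpose_add_m: "transpose (A + B) = transpose A + (transpose B :: 'a::comm_semiring_1^'n^'m)"
  by (simp add: transpose_def vec_eq_iff)

lemma transpose_zero_m: "transpose (0 :: 'a::comm_semiring_1^'n^'m) = 0"
  by (simp add: transpose_def vec_eq_iff)

lemma transpose_sum_m: "transpose (sum f S) = (\<Sum>i\<in>S. transpose (f i :: 'a::comm_semiring_1^'n^'m))"
  by (induction S rule: infinite_finite_induct) (auto simp: transpose_add_m transpose_zero_m)

lemma sum_mv: "(sum f S) *v x = (\<Sum>i\<in>S. (f i :: 'a::comm_semiring_1^'n^'m) *v x)"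
  by (induction S rule: infinite_finite_induct) (auto simp: matrix_vector_mult_add_rdistrib)

lemma inner_transpose_mv: "(x::real^'n) \<bullet> (transpose P *v z) = (P *v x) \<bullet> z"
  by (metis dot_lmul_matrix inner_commute transpose_matrix_vector)

lemma matrix_add_rdistrib_m: "((A + B) ** C) = (A ** C) + (B ** (C::'a::semiring_1^_^_))"
  by (vector matrix_matrix_mult_def sum.distrib[symmetric] field_simps)

lemma inner_vm: "(x::real^'n) \<bullet> (z v* P) = (P *v x) \<bullet> z"
  by (metis dot_lmul_matrix inner_commute)

lemma quad_term: "(x::real^'n) \<bullet> ((transpose P ** F ** P) *v x) = (P *v x) \<bullet> (F *v (P *v x))"
proof -
  have "(transpose P ** F ** P) *v x = transpose P *v (F *v (P *v x))"
    by (simp only: matrix_vector_mul_assoc matrix_mul_assoc)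
  then show ?thesis by (simp only: inner_transpose_mv)
qed

lemma quad_term2: "(x::real^'n) \<bullet> ((transpose P ** P) *v x) = (P *v x) \<bullet> (P *v x)"
proof -
  have "(transpose P ** P) *v x = transpose P *v (P *v x)"
    by (simp only: matrix_vector_mul_assoc)
  then show ?thesis by (simp only: inner_transpose_mv)
qed

lemma filt_props:
  fixes C :: "real^'p^'p" and s :: real
  assumes psd: "psd_matrix C" and s: "s > 0"
  shows "transpose (C ** matrix_inv (C + s *\<^sub>R mat 1)) = C ** matrix_inv (C + s *\<^sub>R mat 1)
    \<and> (\<forall>x. 0 \<le> x \<bullet> ((C ** matrix_inv (C + s *\<^sub>R mat 1)) *v x)
        \<and> x \<bullet> ((C ** matrix_inv (C + s *\<^sub>R mat 1)) *v x) \<le> x \<bullet> x)"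
proof -
  define A where "A = C + s *\<^sub>R mat 1"
  define B where "B = matrix_inv A"
  have CT: "transpose C = C" and Cq: "\<And>x. 0 \<le> x \<bullet> (C *v x)" using psd unfolding psd_matrix_def by auto
  have Av: "\<And>y. A *v y = C *v y + s *\<^sub>R y"
    unfolding A_def by (simp add: matrix_vector_mult_add_rdistrib scaleR_matrix_vector_assoc[symmetric])
  have inj: "inj ((*v) A)"
  proof (rule linear_inj_iff_eq_0[THEN iffD2])
    show "linear ((*v) A)" by (rule matrix_vector_mul_linear)
    show "\<forall>y. A *v y = 0 \<longrightarrow> y = 0"
    proof (intro allI impI)
      fix y assume "A *v y = 0"
      then have "y \<bullet> (A *v y) = 0" by simp
      then have "y \<bullet> (C *v y) + s * (y \<bullet> y) = 0" by (simp add: Av inner_add_right)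
      moreover have "0 \<le> y \<bullet> (C *v y)" by (rule Cq)
      ultimately have "s * (y \<bullet> y) \<le> 0" by linarith
      with s have "y \<bullet> y \<le> 0" by (simp add: mult_le_0_iff)
      then show "y = 0" by (meson inner_gt_zero_iff not_le)
    qed
  qed
  then obtain B0 where "B0 ** A = mat 1" using matrix_left_invertible_injective by blast
  then have "A ** B0 = mat 1 \<and> B0 ** A = mat 1" using matrix_left_right_inverse by blast
  then have AB: "A ** B = mat 1 \<and> B ** A = mat 1"
    unfolding B_def matrix_inv_def by (rule someI)
  have AT: "transpose A = A" unfolding A_def by (simp add: transpose_add_m CT transpose_scalar)
  have "transpose B ** A = mat 1"
    by (metis AB AT matrix_transpose_mul transpose_mat)
  then have BT: "transpose B = B"
    by (metis AB matrix_mul_assoc matrix_mul_lid matrix_mul_rid)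
  have CA: "C ** A = A ** C"
    unfolding A_def by (simp add: matrix_add_ldistrib matrix_add_rdistrib_m matrix_scalar_ac scalar_matrix_assoc[symmetric])
  have BC: "B ** C = C ** B"
  proof -
    have "B ** C = B ** C ** (A ** B)" using AB by simp
    also have "\<dots> = B ** (C ** A) ** B" by (simp add: matrix_mul_assoc)
    also have "\<dots> = B ** (A ** C) ** B" by (simp add: CA)
    also have "\<dots> = (B ** A) ** C ** B" by (simp add: matrix_mul_assoc)
    finally show ?thesis using AB by simp
  qed
  have sym: "transpose (C ** B) = C ** B"
    by (simp add: matrix_transpose_mul BT CT BC)
  have q: "0 \<le> x \<bullet> ((C ** B) *v x) \<and> x \<bullet> ((C ** B) *v x) \<le> x \<bullet> x" for x
  proof -
    define y where "y = B *v x"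
    have xy: "x = A *v y" unfolding y_def using AB by (simp add: matrix_vector_mul_assoc)
    have cy: "(C ** B) *v x = C *v y" unfolding y_def by (simp add: matrix_vector_mul_assoc)
    have e1: "x \<bullet> ((C ** B) *v x) = (C *v y) \<bullet> (C *v y) + s * (y \<bullet> (C *v y))"
      unfolding cy by (subst xy) (simp add: Av inner_add_left)
    have e2: "x \<bullet> x = x \<bullet> ((C ** B) *v x) + s * ((C *v y) \<bullet> y) + s * (s * (y \<bullet> y))"
      unfolding e1 by (subst (1 2) xy) (simp add: Av inner_add_left inner_add_right inner_commute algebra_simps)
    have "0 \<le> y \<bullet> (C *v y)" by (rule Cq)
    moreover have "0 \<le> (C *v y) \<bullet> y" using Cq[of y] by (simp add: inner_commute)
    ultimately show ?thesis using e1 e2 s by (simp add: add_nonneg_nonneg)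
  qed
  show ?thesis using sym q unfolding A_def B_def by simp
qed



lemma F_props:
  fixes C :: "'k::finite \<Rightarrow> real^'p^'p" and b :: "'k \<Rightarrow> real"
  assumes psd: "\<And>j. psd_matrix (C j)" and s: "s > 0"
    and bn: "\<And>j. b j \<ge> 0" and bs: "(\<Sum>j\<in>UNIV. b j) = 1"
  shows "transpose (gmm_filter b C s) = gmm_filter b C s
    \<and> (\<forall>x. 0 \<le> x \<bullet> (gmm_filter b C s *v x) \<and> x \<bullet> (gmm_filter b C s *v x) \<le> x \<bullet> x)"
proof -
  define M where "M j = C j ** matrix_inv (C j + s *\<^sub>R mat 1)" for j
  have Mp: "\<And>j. transpose (M j) = M j \<and> (\<forall>x. 0 \<le> x \<bullet> (M j *v x) \<and> x \<bullet> (M j *v x) \<le> x \<bullet> x)"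
    unfolding M_def using filt_props[OF psd s] by blast
  have F: "gmm_filter b C s = (\<Sum>j\<in>UNIV. b j *\<^sub>R M j)" unfolding gmm_filter_def M_def by simp
  have T: "transpose (gmm_filter b C s) = gmm_filter b C s"
    unfolding F transpose_sum_m by (simp add: transpose_scalar Mp)
  have Q: "x \<bullet> (gmm_filter b C s *v x) = (\<Sum>j\<in>UNIV. b j * (x \<bullet> (M j *v x)))" for x
    unfolding F sum_mv by (simp add: inner_sum_right scaleR_matrix_vector_assoc[symmetric])
  have "0 \<le> x \<bullet> (gmm_filter b C s *v x) \<and> x \<bullet> (gmm_filter b C s *v x) \<le> x \<bullet> x" for x
  proof
    show "0 \<le> x \<bullet> (gmm_filter b C s *v x)" unfolding Q
      by (intro sum_nonneg mult_nonneg_nonneg bn) (use Mp in blast)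
    have "(\<Sum>j\<in>UNIV. b j * (x \<bullet> (M j *v x))) \<le> (\<Sum>j\<in>UNIV. b j * (x \<bullet> x))"
      by (intro sum_mono mult_left_mono bn) (use Mp in blast)
    also have "\<dots> = x \<bullet> x" using bs by (simp add: sum_distrib_right[symmetric])
    finally show "x \<bullet> (gmm_filter b C s *v x) \<le> x \<bullet> x" unfolding Q .
  qed
  with T show ?thesis by blast
qed

theorem lemma2:
  fixes P :: "'i::finite \<Rightarrow> real^'n::finite^'p::finite"
    and C :: "'k::finite \<Rightarrow> real^'p^'p"
    and beta :: "'i \<Rightarrow> 'k \<Rightarrow> real"
    and sigma2 :: real
  assumes extr: "\<And>i. extraction_matrix (P i)"
    and cover: "(\<Sum>i\<in>UNIV. transpose (P i) ** P i) = real CARD('p) *\<^sub>R mat 1"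
    and C_psd: "\<And>j. psd_matrix (C j)"
    and sigma_pos: "sigma2 > 0"
    and beta_nonneg: "\<And>i j. beta i j \<ge> 0"
    and beta_sum: "\<And>i. (\<Sum>j\<in>UNIV. beta i j) = 1"
  shows "transpose (gmm_W P beta C sigma2) = gmm_W P beta C sigma2
       \<and> psd_matrix (gmm_W P beta C sigma2)
       \<and> (\<forall>l. is_eigenvalue (gmm_W P beta C sigma2) l \<longrightarrow> l \<le> 1)"
proof -
  define F where "F i = gmm_filter (beta i) C sigma2" for i
  define c where "c = real CARD('p)"
  have cpos: "c > 0" unfolding c_def by simp
  have Fp: "transpose (F i) = F i \<and> (\<forall>x. 0 \<le> x \<bullet> (F i *v x) \<and> x \<bullet> (F i *v x) \<le> x \<bullet> x)" for i
    unfolding F_def by (rule F_props[of C sigma2 "beta i", OF C_psd sigma_pos beta_nonneg beta_sum])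
  have Fle: "y \<bullet> (F i *v y) \<le> y \<bullet> y" for i y
    using Fp[of i] by blast
  have Fge: "0 \<le> y \<bullet> (F i *v y)" for i y
    using Fp[of i] by blast
  have W: "gmm_W P beta C sigma2 = (1 / c) *\<^sub>R (\<Sum>i\<in>UNIV. transpose (P i) ** F i ** P i)"
    unfolding gmm_W_def F_def c_def by simp
  have Ti: "transpose (transpose (P i) ** F i ** P i) = transpose (P i) ** F i ** P i" for i
    by (simp only: matrix_transpose_mul transpose_transpose Fp[THEN conjunct1] matrix_mul_assoc)
  have T: "transpose (gmm_W P beta C sigma2) = gmm_W P beta C sigma2"
    unfolding W transpose_sum_m transpose_scalar Ti by (rule refl)
  have Q: "x \<bullet> (gmm_W P beta C sigma2 *v x) = (1 / c) * (\<Sum>i\<in>UNIV. (P i *v x) \<bullet> (F i *v (P i *v x)))" for x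
    unfolding W
    by (simp only: scaleR_matrix_vector_assoc[symmetric] sum_mv inner_sum_right
        inner_scaleR_right quad_term)
  have cov: "(\<Sum>i\<in>UNIV. (P i *v x) \<bullet> (P i *v x)) = c * (x \<bullet> x)" for x
  proof -
    have "(\<Sum>i\<in>UNIV. (P i *v x) \<bullet> (P i *v x)) = x \<bullet> ((\<Sum>i\<in>UNIV. transpose (P i) ** P i) *v x)"
      by (simp only: sum_mv inner_sum_right quad_term2)
    also have "\<dots> = c * (x \<bullet> x)"
      unfolding cover c_def by (simp add: scaleR_matrix_vector_assoc[symmetric])
    finally show ?thesis .
  qed
  have Q0: "0 \<le> x \<bullet> (gmm_W P beta C sigma2 *v x)" for x
    unfolding Q using cpos by (intro mult_nonneg_nonneg sum_nonneg Fge) simp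
  have Q1: "x \<bullet> (gmm_W P beta C sigma2 *v x) \<le> x \<bullet> x" for x
  proof -
    have A: "(\<Sum>i\<in>UNIV. (P i *v x) \<bullet> (F i *v (P i *v x))) \<le> (\<Sum>i\<in>UNIV. (P i *v x) \<bullet> (P i *v x))"
      by (intro sum_mono Fle)
    have B: "(1 / c) * (\<Sum>i\<in>UNIV. (P i *v x) \<bullet> (F i *v (P i *v x))) \<le> (1 / c) * (\<Sum>i\<in>UNIV. (P i *v x) \<bullet> (P i *v x))"
      by (rule mult_left_mono[OF A]) (use cpos in simp)
    have "(1 / c) * (\<Sum>i\<in>UNIV. (P i *v x) \<bullet> (P i *v x)) = x \<bullet> x"
      unfolding cov using cpos by simp
    with B show ?thesis unfolding Q by linarith
  qed
  have E: "l \<le> 1" if ev: "is_eigenvalue (gmm_W P beta C sigma2) l" for l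
  proof -
    obtain v where vv: "v \<noteq> 0 \<and> gmm_W P beta C sigma2 *v v = l *\<^sub>R v"
      using ev unfolding is_eigenvalue_def by blast
    have v: "v \<noteq> 0" "gmm_W P beta C sigma2 *v v = l *\<^sub>R v"
      using vv by (rule conjunct1, rule conjunct2)
    have "v \<bullet> (gmm_W P beta C sigma2 *v v) = l * (v \<bullet> v)"
      by (simp only: v(2) inner_scaleR_right)
    then have "l * (v \<bullet> v) \<le> 1 * (v \<bullet> v)" using Q1[of v] by linarith
    moreover have "v \<bullet> v > 0" using v(1) by simp
    ultimately show ?thesis by (rule mult_right_le_imp_le)
  qed
  show ?thesis using T Q0 E unfolding psd_matrix_def by blast
qed

end
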